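(* Let $k$ be a positive integer and $G$ a graph. (1) If $G$ contains a Hamiltonian cycle $C$ such that $G-E(C)\in\mathcal{SZ}_k$, then $G\in\mathcal{SC}_k$. (2) If for any two distinct vertices $x,y$ of $G$ there is a Hamiltonian $(x,y)$-path $P_{xy}$ such that $G-E(P_{xy})\in\mathcal{SZ}_k$, then $G\in\mathcal{W}_k$.
   Context: Graphs may have parallel edges but no loops. A $\mathbb{Z}_k$-boundary of $G$ is a map $\beta:V(G)\to\mathbb{Z}_k$ with $\sum_v\beta(v)\equiv0\pmod k$; a $(\mathbb{Z}_k,\beta)$-orientation is an orientation $D$ with $d^+_D(v)-d^-_D(v)\equiv\beta(v)\pmod k$ for all $v$; $G$ is strongly $\mathbb{Z}_k$-connected (written $G\in\mathcal{SZ}_k$) if it has a $(\mathbb{Z}_k,\beta)$-orientation for every $\mathbb{Z}_k$-boundary $\beta$. A $\mathbb{Z}_{2k}$-pc-boundary of $G$ is a map $\beta:V(G)\to\{0,\pm1,\dots,\pm k\}$ with $\beta(v)\equiv d_G(v)\pmod2$ for all $v$ and $\sum_v\beta(v)\equiv0\pmod{2k}$; a $(2k,\beta)$-orientation is an orientation $D$ with $d^+_D(v)-d^-_D(v)\equiv\beta(v)\pmod{2k}$ for all $v$. An orientation is strongly connected if every nonempty proper vertex subset $S$ has $d^+_D(S)>0$ and $d^-_D(S)>0$. $\mathcal{SC}_k$ is the family of graphs having a strongly connected $(2k,\beta)$-orientation for every $\mathbb{Z}_{2k}$-pc-boundary $\beta$. A graph $G$ is a nice supergraph of $H$ if $H\subseteq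 G$ and there are distinct $x,y\in V(H)$ joined by a path in $G-E(H)$. For connected $H\subseteq G$, $G/H$ is obtained by identifying $V(H)$ into a new vertex $w$ and deleting loops; given a $\mathbb{Z}_{2k}$-pc-boundary $\beta$ of $G$, $\beta'$ on $G/H$ is defined by $\beta'(w)\equiv\sum_{v\in V(H)}\beta(v)\pmod{2k}$ (taken in $\{0,\pm1,\dots,\pm k\}$) and $\beta'(v)=\beta(v)$ otherwise. $H\in\mathcal{W}_k$ (weakly contractible) if for every nice supergraph $G$ of $H$ and every $\mathbb{Z}_{2k}$-pc-boundary $\beta$ of $G$, every strongly connected $(2k,\beta')$-orientation of $G/H$ can be extended (by orienting the edges of $H$) to a strongly connected $(2k,\beta)$-orientation of $G$. *)

theory Defs
  imports Main
begin

(* A finite loopless multigraph: vertex set V, edge set E, and endpoint map ends.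
   Parallel edges are allowed (distinct edge names with the same ends). *)
definition mgraph :: "'a set \<Rightarrow> 'e set \<Rightarrow> ('e \<Rightarrow> 'a \<times> 'a) \<Rightarrow> bool" where
  "mgraph V E ends \<longleftrightarrow> finite V \<and> finite E \<and>
     (\<forall>e\<in>E. fst (ends e) \<in> V \<and> snd (ends e) \<in> V \<and> fst (ends e) \<noteq> snd (ends e))"

definition joins :: "('e \<Rightarrow> 'a \<times> 'a) \<Rightarrow> 'e \<Rightarrow> 'a \<Rightarrow> 'a \<Rightarrow> bool" where
  "joins ends e a b \<longleftrightarrow> ends e = (a, b) \<or> ends e = (b, a)"

definition degree :: "'e set \<Rightarrow> ('e \<Rightarrow> 'a \<times> 'a) \<Rightarrow> 'a \<Rightarrow> nat" where
  "degree E ends v = card {e\<in>E. fst (ends e) = v \<or> snd (ends e) = v}"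

(* An orientation is D :: 'e \<Rightarrow> bool; D e = True orients e from fst (ends e) to snd (ends e). *)
definition tailv :: "('e \<Rightarrow> 'a \<times> 'a) \<Rightarrow> ('e \<Rightarrow> bool) \<Rightarrow> 'e \<Rightarrow> 'a" where
  "tailv ends D e = (if D e then fst (ends e) else snd (ends e))"

definition headv :: "('e \<Rightarrow> 'a \<times> 'a) \<Rightarrow> ('e \<Rightarrow> bool) \<Rightarrow> 'e \<Rightarrow> 'a" where
  "headv ends D e = (if D e then snd (ends e) else fst (ends e))"

definition outdeg :: "'e set \<Rightarrow> ('e \<Rightarrow> 'a \<times> 'a) \<Rightarrow> ('e \<Rightarrow> bool) \<Rightarrow> 'a \<Rightarrow> nat" where
  "outdeg E ends D v = card {e\<in>E. tailv ends D e = v}"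

definition indeg :: "'e set \<Rightarrow> ('e \<Rightarrow> 'a \<times> 'a) \<Rightarrow> ('e \<Rightarrow> bool) \<Rightarrow> 'a \<Rightarrow> nat" where
  "indeg E ends D v = card {e\<in>E. headv ends D e = v}"

definition netflow :: "'e set \<Rightarrow> ('e \<Rightarrow> 'a \<times> 'a) \<Rightarrow> ('e \<Rightarrow> bool) \<Rightarrow> 'a \<Rightarrow> int" where
  "netflow E ends D v = int (outdeg E ends D v) - int (indeg E ends D v)"

(* Z_k-boundaries are represented by integer-valued maps (only residues mod k matter). *)
definition SZ :: "nat \<Rightarrow> 'a set \<Rightarrow> 'e set \<Rightarrow> ('e \<Rightarrow> 'a \<times> 'a) \<Rightarrow> bool" where
  "SZ k V E ends \<longleftrightarrow>
     (\<forall>\<beta> :: 'a \<Rightarrow> int. (\<Sum>v\<in>V. \<beta> v) mod int k = 0 \<longrightarrow>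
        (\<exists>D. \<forall>v\<in>V. netflow E ends D v mod int k = \<beta> v mod int k))"

definition pc_boundary :: "nat \<Rightarrow> 'a set \<Rightarrow> 'e set \<Rightarrow> ('e \<Rightarrow> 'a \<times> 'a) \<Rightarrow> ('a \<Rightarrow> int) \<Rightarrow> bool" where
  "pc_boundary k V E ends \<beta> \<longleftrightarrow>
     (\<forall>v\<in>V. - int k \<le> \<beta> v \<and> \<beta> v \<le> int k \<and> \<beta> v mod 2 = int (degree E ends v) mod 2) \<and>
     (\<Sum>v\<in>V. \<beta> v) mod (2 * int k) = 0"

definition orient2k :: "nat \<Rightarrow> 'a set \<Rightarrow> 'e set \<Rightarrow> ('e \<Rightarrow> 'a \<times> 'a) \<Rightarrow> ('a \<Rightarrow> int) \<Rightarrow> ('e \<Rightarrow> bool) \<Rightarrow> bool" where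
  "orient2k k V E ends \<beta> D \<longleftrightarrow>
     (\<forall>v\<in>V. netflow E ends D v mod (2 * int k) = \<beta> v mod (2 * int k))"

definition strongly_conn :: "'a set \<Rightarrow> 'e set \<Rightarrow> ('e \<Rightarrow> 'a \<times> 'a) \<Rightarrow> ('e \<Rightarrow> bool) \<Rightarrow> bool" where
  "strongly_conn V E ends D \<longleftrightarrow>
     (\<forall>S. S \<subseteq> V \<and> S \<noteq> {} \<and> S \<noteq> V \<longrightarrow>
        (\<exists>e\<in>E. tailv ends D e \<in> S \<and> headv ends D e \<notin> S) \<and>
        (\<exists>e\<in>E. headv ends D e \<in> S \<and> tailv ends D e \<notin> S))"

definition SC :: "nat \<Rightarrow> 'a set \<Rightarrow> 'e set \<Rightarrow> ('e \<Rightarrow> 'a \<times> 'a) \<Rightarrow> bool" where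
  "SC k V E ends \<longleftrightarrow>
     (\<forall>\<beta>. pc_boundary k V E ends \<beta> \<longrightarrow>
        (\<exists>D. orient2k k V E ends \<beta> D \<and> strongly_conn V E ends D))"

(* Hamiltonian cycle (edge set C); length 2 cycles use two distinct parallel edges *)
definition ham_cycle :: "'a set \<Rightarrow> 'e set \<Rightarrow> ('e \<Rightarrow> 'a \<times> 'a) \<Rightarrow> 'e set \<Rightarrow> bool" where
  "ham_cycle V E ends C \<longleftrightarrow>
     (\<exists>vs es. 2 \<le> length vs \<and> distinct vs \<and> set vs = V \<and>
        length es = length vs \<and> distinct es \<and> set es \<subseteq> E \<and> set es = C \<and>
        (\<forall>i<length vs. joins ends (es ! i) (vs ! i) (vs ! ((i + 1) mod length vs))))"

definition ham_path :: "'a set \<Rightarrow> 'e set \<Rightarrow> ('e \<Rightarrow> 'a \<times> 'a) \<Rightarrow> 'a \<Rightarrow> 'a \<Rightarrow> 'e set \<Rightarrow> bool" where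
  "ham_path V E ends x y P \<longleftrightarrow>
     (\<exists>vs es. vs \<noteq> [] \<and> distinct vs \<and> set vs = V \<and> hd vs = x \<and> last vs = y \<and>
        length es + 1 = length vs \<and> set es \<subseteq> E \<and> set es = P \<and>
        (\<forall>i<length es. joins ends (es ! i) (vs ! i) (vs ! (i + 1))))"

definition adj :: "'e set \<Rightarrow> ('e \<Rightarrow> 'a \<times> 'a) \<Rightarrow> ('a \<times> 'a) set" where
  "adj F ends = {(a, b). \<exists>e\<in>F. joins ends e a b}"

(* contraction of the vertex set S into the vertex w \<in> S: vertex map, vertex set, edge set, ends *)
definition cmap :: "'a set \<Rightarrow> 'a \<Rightarrow> 'a \<Rightarrow> 'a" where
  "cmap S w v = (if v \<in> S then w else v)"

definition cverts :: "'a set \<Rightarrow> 'a set \<Rightarrow> 'a \<Rightarrow> 'a set" where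
  "cverts VG S w = (VG - S) \<union> {w}"

(* loops created by the identification are deleted *)
definition cedges :: "'e set \<Rightarrow> ('e \<Rightarrow> 'a \<times> 'a) \<Rightarrow> 'a set \<Rightarrow> 'e set" where
  "cedges EG ends S = {e\<in>EG. \<not> (fst (ends e) \<in> S \<and> snd (ends e) \<in> S)}"

definition cends :: "('e \<Rightarrow> 'a \<times> 'a) \<Rightarrow> 'a set \<Rightarrow> 'a \<Rightarrow> 'e \<Rightarrow> 'a \<times> 'a" where
  "cends ends S w e = map_prod (cmap S w) (cmap S w) (ends e)"

(* representative of r mod 2k in {-k+1,...,k} \<subseteq> {0,\<pm>1,...,\<pm>k} *)
definition rep2k :: "nat \<Rightarrow> int \<Rightarrow> int" where
  "rep2k k r = (let m = r mod (2 * int k) in if m > int k then m - 2 * int k else m)"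

definition cbeta :: "nat \<Rightarrow> 'a set \<Rightarrow> 'a \<Rightarrow> ('a \<Rightarrow> int) \<Rightarrow> 'a \<Rightarrow> int" where
  "cbeta k S w \<beta> v = (if v = w then rep2k k (\<Sum>u\<in>S. \<beta> u) else \<beta> v)"

(* Supergraphs G of H = (V,E,ends) are taken with vertex type 'a + nat
   and edge type 'e + nat, H being embedded via Inl; every finite supergraph of H is
   isomorphic (over H) to one of this form. *)
definition WC :: "nat \<Rightarrow> 'a set \<Rightarrow> 'e set \<Rightarrow> ('e \<Rightarrow> 'a \<times> 'a) \<Rightarrow> bool" where
  "WC k V E ends \<longleftrightarrow>
     (\<forall>(VG :: ('a + nat) set) (EG :: ('e + nat) set) endsG.
        mgraph VG EG endsG \<and> Inl ` V \<subseteq> VG \<and> Inl ` E \<subseteq> EG \<and>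
        (\<forall>e\<in>E. endsG (Inl e) = map_prod Inl Inl (ends e)) \<and>
        (\<exists>x\<in>V. \<exists>y\<in>V. x \<noteq> y \<and> (Inl x, Inl y) \<in> (adj (EG - Inl ` E) endsG)\<^sup>*)
      \<longrightarrow>
        (let S = Inl ` V; w = Inl (SOME x. x \<in> V) in
         \<forall>\<beta>. pc_boundary k VG EG endsG \<beta> \<longrightarrow>
           (\<forall>D. orient2k k (cverts VG S w) (cedges EG endsG S) (cends endsG S w) (cbeta k S w \<beta>) D \<and>
                strongly_conn (cverts VG S w) (cedges EG endsG S) (cends endsG S w) D
              \<longrightarrow> (\<exists>D'. (\<forall>e\<in>cedges EG endsG S. D' e = D e) \<and>
                        orient2k k VG EG endsG \<beta> D' \<and> strongly_conn VG EG endsG D'))))"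

end

theory Submission
  imports Defs
begin

definition sig :: "('e \<Rightarrow> 'a \<times> 'a) \<Rightarrow> ('e \<Rightarrow> bool) \<Rightarrow> 'e \<Rightarrow> 'a \<Rightarrow> int" where
  "sig ends D e v = (if tailv ends D e = v then 1 else 0) - (if headv ends D e = v then 1 else 0)"

lemma card_filter_sum: "finite A \<Longrightarrow> int (card {x\<in>A. P x}) = (\<Sum>x\<in>A. if P x then 1 else 0)"
proof -
  assume "finite A"
  moreover have "{x\<in>A. P x} = A \<inter> Collect P" by auto
  ultimately show ?thesis by (simp add: sum.If_cases)
qed

lemma netflow_sum: "finite E \<Longrightarrow> netflow E ends D v = (\<Sum>e\<in>E. sig ends D e v)"
  unfolding netflow_def outdeg_def indeg_def sig_def
  by (simp add: card_filter_sum sum_subtractf)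

lemma sig_sum_set: "finite A \<Longrightarrow> (\<Sum>z\<in>A. sig ends D e z) =
   (if tailv ends D e \<in> A then 1 else 0) - (if headv ends D e \<in> A then 1 else 0)"
  unfolding sig_def by (simp add: sum_subtractf sum.delta')

lemma netflow_total: "finite E \<Longrightarrow> finite A \<Longrightarrow>
   (\<Sum>z\<in>A. netflow E ends D z) = (\<Sum>e\<in>E. (if tailv ends D e \<in> A then 1 else 0) - (if headv ends D e \<in> A then 1 else 0))"
proof -
  assume f: "finite E" "finite A"
  have "(\<Sum>z\<in>A. \<Sum>e\<in>E. sig ends D e z) = (\<Sum>e\<in>E. \<Sum>z\<in>A. sig ends D e z)" by (rule sum.swap)
  then show ?thesis using f by (simp add: netflow_sum sig_sum_set)
qed

lemma netflow_total0: "finite E \<Longrightarrow> finite A \<Longrightarrow> \<forall>e\<in>E. fst (ends e) \<in> A \<and> snd (ends e) \<in> A \<Longrightarrow>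
   (\<Sum>z\<in>A. netflow E ends D z) = 0"
  by (auto simp: netflow_total tailv_def headv_def intro!: sum.neutral)

lemma netflow_parity:
  assumes "finite E" "\<forall>e\<in>E. fst (ends e) \<noteq> snd (ends e)"
  shows "netflow E ends D v mod 2 = int (degree E ends v) mod 2"
proof -
  let ?O = "{e\<in>E. tailv ends D e = v}" and ?I = "{e\<in>E. headv ends D e = v}"
  have u: "?O \<union> ?I = {e\<in>E. fst (ends e) = v \<or> snd (ends e) = v}"
    by (auto simp: tailv_def headv_def)
  have d: "?O \<inter> ?I = {}" using assms(2) by (auto simp: tailv_def headv_def split: if_splits)
  have "card (?O \<union> ?I) = card ?O + card ?I"
    by (rule card_Un_disjoint) (use assms d in auto)
  hence "degree E ends v = outdeg E ends D v + indeg E ends D v"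
    using u unfolding degree_def outdeg_def indeg_def by simp
  hence "netflow E ends D v = int (degree E ends v) - 2 * int (indeg E ends D v)"
    unfolding netflow_def by simp
  thus ?thesis by presburger
qed

lemma crt2:
  fixes a b :: int
  assumes "odd k" "a mod int k = b mod int k" "a mod 2 = b mod 2"
  shows "a mod (2 * int k) = b mod (2 * int k)"
proof -
  have "int k dvd (a - b)" using assms(2) by (simp add: mod_eq_dvd_iff)
  moreover have "2 dvd (a - b)" using assms(3) by (simp add: mod_eq_dvd_iff)
  moreover have "coprime 2 (int k)" using assms(1) by simp
  ultimately have "2 * int k dvd (a - b)" by (simp add: divides_mult)
  thus ?thesis by (simp add: mod_eq_dvd_iff)
qed

lemma mod_from_2k:
  fixes a b :: int
  shows "a mod (2 * int k) = b mod (2 * int k) \<Longrightarrow> a mod int k = b mod int k"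
  by (metis mod_mod_cancel dvd_triv_right)

lemma SZ_even_false:
  assumes "SZ k V E ends" "even k" "finite V" "finite E" "\<forall>e\<in>E. fst (ends e) \<noteq> snd (ends e)"
    "a \<in> V" "b \<in> V" "a \<noteq> b"
  shows False
proof -
  define c where "c = int (degree E ends a) + 1"
  define \<beta> where "\<beta> = (\<lambda>v. (if v = a then c else 0) - (if v = b then c else 0))"
  have "(\<Sum>v\<in>V. \<beta> v) = 0" unfolding \<beta>_def using assms(3,6,7) by (simp add: sum_subtractf sum.delta')
  then obtain D where D: "\<forall>v\<in>V. netflow E ends D v mod int k = \<beta> v mod int k"
    using assms(1) unfolding SZ_def by fastforce
  have "\<beta> a = c" using assms(8) by (simp add: \<beta>_def)
  then have "netflow E ends D a mod int k = c mod int k" using D assms(6) by metis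
  hence "netflow E ends D a mod 2 = c mod 2" using assms(2)
    by (metis mod_mod_cancel even_of_nat_iff)
  moreover have "netflow E ends D a mod 2 = int (degree E ends a) mod 2"
    using netflow_parity[OF assms(4,5)] by blast
  ultimately show False unfolding c_def by presburger
qed

lemma idx_step:
  assumes "i < j" "f i \<in> T" "f j \<notin> T"
  shows "\<exists>m. i \<le> m \<and> m < j \<and> f m \<in> T \<and> f (Suc m) \<notin> T"
  using assms
proof (induction j)
  case 0 then show ?case by simp
next
  case (Suc j)
  show ?case
  proof (cases "f j \<in> T")
    case True then show ?thesis using Suc by (intro exI[of _ j]) auto
  next
    case False
    then have "i < j" using Suc by (metis less_SucE)
    then show ?thesis using Suc False by (metis less_SucI)
  qed
qed

lemma sc_from_leaving:
  assumes "\<forall>e\<in>E. fst (ends e) \<in> V \<and> snd (ends e) \<in> V"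
    "\<And>T. T \<subseteq> V \<Longrightarrow> T \<noteq> {} \<Longrightarrow> T \<noteq> V \<Longrightarrow> \<exists>e\<in>E. tailv ends D e \<in> T \<and> headv ends D e \<notin> T"
  shows "strongly_conn V E ends D"
  unfolding strongly_conn_def
proof (intro allI impI conjI)
  fix S assume S: "S \<subseteq> V \<and> S \<noteq> {} \<and> S \<noteq> V"
  then show "\<exists>e\<in>E. tailv ends D e \<in> S \<and> headv ends D e \<notin> S" using assms(2) by blast
  have "V - S \<subseteq> V" "V - S \<noteq> {}" "V - S \<noteq> V" using S by auto
  then obtain e where e: "e \<in> E" "tailv ends D e \<in> V - S" "headv ends D e \<notin> V - S"
    using assms(2) by meson
  have "headv ends D e \<in> V" using assms(1) e(1) by (auto simp: headv_def)
  then show "\<exists>e\<in>E. headv ends D e \<in> S \<and> tailv ends D e \<notin> S" using e by blast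
qed



lemma sig_cong: "D e = D' e \<Longrightarrow> sig ends D e v = sig ends D' e v"
  by (simp add: sig_def tailv_def headv_def)

lemma tailv_cong: "D e = D' e \<Longrightarrow> tailv ends D e = tailv ends D' e"
  by (simp add: tailv_def)

lemma headv_cong: "D e = D' e \<Longrightarrow> headv ends D e = headv ends D' e"
  by (simp add: headv_def)

lemma modk_add:
  fixes a b c m :: int
  assumes "b mod m = (c - a) mod m"
  shows "(a + b) mod m = c mod m"
proof -
  have "(a + b) mod m = (a + b mod m) mod m" by (simp add: mod_add_right_eq)
  also have "\<dots> = (a + (c - a) mod m) mod m" using assms by simp
  also have "\<dots> = c mod m" by (simp add: mod_add_right_eq)
  finally show ?thesis .
qed

lemma netflow_split:
  assumes "finite E" "C \<subseteq> E"
  shows "netflow E ends D v = netflow C ends D v + netflow (E - C) ends D v"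
proof -
  have "E = C \<union> (E - C)" using assms by auto
  then have "(\<Sum>e\<in>E. sig ends D e v) = (\<Sum>e\<in>C. sig ends D e v) + (\<Sum>e\<in>E - C. sig ends D e v)"
    using assms by (metis Diff_disjoint finite_Diff finite_subset sum.union_disjoint)
  moreover have "finite C" "finite (E - C)" using assms finite_subset by auto
  ultimately show ?thesis using assms(1) by (simp add: netflow_sum)
qed

lemma netflow_cong:
  assumes "finite E" "\<forall>e\<in>E. D e = D' e"
  shows "netflow E ends D v = netflow E ends D' v"
proof -
  have "(\<Sum>e\<in>E. sig ends D e v) = (\<Sum>e\<in>E. sig ends D' e v)"
    by (rule sum.cong[OF refl], rule sig_cong, use assms(2) in blast)
  then show ?thesis using assms(1) by (simp add: netflow_sum)
qed

lemma part1:
  assumes k: "odd k" and G: "mgraph V E ends" and HC: "ham_cycle V E ends C"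
    and SZ: "SZ k V (E - C) ends"
  shows "SC k V E ends"
proof -
  obtain vs es where len: "2 \<le> length vs" and dvs: "distinct vs" and svs: "set vs = V"
    and les: "length es = length vs" and des: "distinct es" and sE: "set es \<subseteq> E"
    and sC: "set es = C"
    and jn: "\<forall>i<length vs. joins ends (es ! i) (vs ! i) (vs ! ((i + 1) mod length vs))"
    using HC unfolding ham_cycle_def apply (elim exE conjE) apply (rule that) apply assumption+ done
  define n where "n = length vs"
  have fin: "finite V" "finite E" and lf: "\<forall>e\<in>E. fst (ends e) \<in> V \<and> snd (ends e) \<in> V \<and> fst (ends e) \<noteq> snd (ends e)"
    using G unfolding mgraph_def by auto
  have CE: "C \<subseteq> E" using sE sC by simp
  define Co where "Co h = (\<exists>i<n. es ! i = h \<and> ends h = (vs ! i, vs ! ((i + 1) mod n)))" for h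
  have cyc: "tailv ends Co (es ! m) = vs ! m \<and> headv ends Co (es ! m) = vs ! ((m + 1) mod n)"
    if m: "m < n" for m
  proof -
    have j: "joins ends (es ! m) (vs ! m) (vs ! ((m + 1) mod n))" using jn m n_def by auto
    have em: "es ! m \<in> E" using sE m les n_def by auto
    show ?thesis
    proof (cases "ends (es ! m) = (vs ! m, vs ! ((m + 1) mod n))")
      case True
      then have "Co (es ! m)" unfolding Co_def using m by blast
      then show ?thesis using True by (simp add: tailv_def headv_def)
    next
      case False
      then have e2: "ends (es ! m) = (vs ! ((m + 1) mod n), vs ! m)" using j by (simp add: joins_def)
      have "\<not> Co (es ! m)"
      proof
        assume "Co (es ! m)"
        then obtain i where i: "i < n" "es ! i = es ! m" "ends (es ! m) = (vs ! i, vs ! ((i + 1) mod n))"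
          unfolding Co_def by blast
        have "i = m" using i des m les n_def by (simp add: nth_eq_iff_index_eq)
        moreover have nl: "fst (ends (es ! m)) \<noteq> snd (ends (es ! m))" using lf em by blast
        ultimately show False using i(3) e2 by simp
      qed
      then show ?thesis using e2 by (simp add: tailv_def headv_def)
    qed
  qed
  show ?thesis unfolding SC_def
  proof (intro allI impI)
    fix \<beta> assume pc: "pc_boundary k V E ends \<beta>"
    define \<gamma> where "\<gamma> v = \<beta> v - netflow C ends Co v" for v
    have finC: "finite C" using CE fin(2) by (rule finite_subset)
    have s0: "(\<Sum>v\<in>V. netflow C ends Co v) = 0"
      by (rule netflow_total0) (use finC fin lf CE in auto)
    have "(\<Sum>v\<in>V. \<beta> v) mod (2 * int k) = 0" using pc unfolding pc_boundary_def by (rule conjunct2)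
    then have "(\<Sum>v\<in>V. \<beta> v) mod int k = 0" using mod_from_2k[of "sum \<beta> V" k 0] by simp
    then have g0: "(\<Sum>v\<in>V. \<gamma> v) mod int k = 0" unfolding \<gamma>_def using s0 by (simp add: sum_subtractf)
    obtain R where R: "\<forall>v\<in>V. netflow (E - C) ends R v mod int k = \<gamma> v mod int k"
      using SZ[unfolded SZ_def, rule_format, OF g0] by (elim exE)
    define D where "D h = (if h \<in> C then Co h else R h)" for h
    have nf: "netflow E ends D v = netflow C ends Co v + netflow (E - C) ends R v" for v
    proof -
      have "netflow C ends D v = netflow C ends Co v"
        by (rule netflow_cong) (use finC in \<open>auto simp: D_def\<close>)
      moreover have "netflow (E - C) ends D v = netflow (E - C) ends R v"
        by (rule netflow_cong) (use fin in \<open>auto simp: D_def\<close>)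
      moreover have "netflow E ends D v = netflow C ends D v + netflow (E - C) ends D v"
        by (rule netflow_split[OF fin(2) CE])
      ultimately show ?thesis by simp
    qed
    have "orient2k k V E ends \<beta> D" unfolding orient2k_def
    proof
      fix v assume v: "v \<in> V"
      have "netflow E ends D v mod int k = \<beta> v mod int k"
        unfolding nf by (rule modk_add) (use R v in \<open>auto simp: \<gamma>_def\<close>)
      moreover have "netflow E ends D v mod 2 = \<beta> v mod 2"
      proof -
        have "\<beta> v mod 2 = int (degree E ends v) mod 2" using pc v unfolding pc_boundary_def by auto
        moreover have "\<forall>e\<in>E. fst (ends e) \<noteq> snd (ends e)" using lf by auto
        ultimately show ?thesis using netflow_parity[OF fin(2), of ends D v] by simp
      qed
      ultimately show "netflow E ends D v mod (2 * int k) = \<beta> v mod (2 * int k)"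
        using crt2 k by blast
    qed
    moreover have "strongly_conn V E ends D"
    proof (rule sc_from_leaving)
      show "\<forall>e\<in>E. fst (ends e) \<in> V \<and> snd (ends e) \<in> V" using lf by auto
      fix T assume T: "T \<subseteq> V" "T \<noteq> {}" "T \<noteq> V"
      obtain t where t: "t \<in> T" using T by blast
      obtain t' where t': "t' \<in> V" "t' \<notin> T" using T by blast
      have "t \<in> set vs" using t T svs by blast
      then obtain i where i: "i < n" "vs ! i = t" unfolding n_def in_set_conv_nth by blast
      have "t' \<in> set vs" using t' svs by blast
      then obtain j where j: "j < n" "vs ! j = t'" unfolding n_def in_set_conv_nth by blast
      have "\<exists>m<n. vs ! m \<in> T \<and> vs ! ((m + 1) mod n) \<notin> T"
      proof (cases "i < j")
        case True
        then obtain m where "i \<le> m" "m < j" "vs ! m \<in> T" "vs ! (Suc m) \<notin> T"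
          using idx_step[of i j "\<lambda>i. vs ! i" T] i j t t' by auto
        then show ?thesis using j by (intro exI[of _ m]) auto
      next
        case False
        have "i \<noteq> j" using i j t t' by auto
        then have ji: "j < i" using False by simp
        show ?thesis
        proof (cases "vs ! (n - 1) \<in> T")
          case False
          then have "i \<noteq> n - 1" using i t by auto
          then have "i < n - 1" using i by simp
          then obtain m where "i \<le> m" "m < n - 1" "vs ! m \<in> T" "vs ! (Suc m) \<notin> T"
            using idx_step[of i "n - 1" "\<lambda>i. vs ! i" T] i t False by auto
          then show ?thesis by (intro exI[of _ m]) auto
        next
          case True
          show ?thesis
          proof (cases "vs ! 0 \<in> T")
            case False
            have nn: "n - 1 + 1 = n" using len n_def by simp
            have "n - 1 < n" "(n - 1 + 1) mod n = 0" using len n_def nn by (simp, simp only: nn mod_self)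
            then show ?thesis using True False by (intro exI[of _ "n - 1"]) simp
          next
            case True
            have "j \<noteq> 0" using True j(2) t'(2) by (cases j) auto
            then have "0 < j" by simp
            then obtain m where "0 \<le> m" "m < j" "vs ! m \<in> T" "vs ! (Suc m) \<notin> T"
              using idx_step[of 0 j "\<lambda>i. vs ! i" T] j t' True by auto
            then show ?thesis using j by (intro exI[of _ m]) auto
          qed
        qed
      qed
      then obtain m where m: "m < n" "vs ! m \<in> T" "vs ! ((m + 1) mod n) \<notin> T" by blast
      have em: "es ! m \<in> C" "es ! m \<in> E" using m sE sC les n_def by auto
      have DC: "D (es ! m) = Co (es ! m)" using em by (simp add: D_def)
      have "tailv ends D (es ! m) = vs ! m" "headv ends D (es ! m) = vs ! ((m + 1) mod n)"
        using cyc[OF m(1)] DC by (simp_all add: tailv_def headv_def)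
      then show "\<exists>e\<in>E. tailv ends D e \<in> T \<and> headv ends D e \<notin> T" using m em by metis
    qed
    ultimately show "\<exists>D. orient2k k V E ends \<beta> D \<and> strongly_conn V E ends D" by blast
  qed
qed



inductive wr :: "'e set \<Rightarrow> ('e \<Rightarrow> 'a \<times> 'a) \<Rightarrow> 'a set \<Rightarrow> ('e \<Rightarrow> bool) \<Rightarrow> 'a \<Rightarrow> 'a \<Rightarrow> bool"
  for Ec ends S D where
  wr_base: "e \<in> Ec \<Longrightarrow> wr Ec ends S D (tailv ends D e) (headv ends D e)"
| wr_step: "wr Ec ends S D u m \<Longrightarrow> m \<notin> S \<Longrightarrow> e \<in> Ec \<Longrightarrow> tailv ends D e = m \<Longrightarrow>
    wr Ec ends S D u (headv ends D e)"

lemma wr_cut: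
  assumes "wr Ec ends S D u v"
  shows "u \<in> T \<Longrightarrow> v \<notin> T \<Longrightarrow> \<exists>e\<in>Ec. tailv ends D e \<in> T \<and> headv ends D e \<notin> T"
  using assms
proof (induction rule: wr.induct)
  case (wr_base e)
  then show ?case by blast
next
  case (wr_step u m e)
  show ?case
  proof (cases "m \<in> T")
    case True
    then show ?thesis using wr_step.hyps(3,4) wr_step.prems(2) by blast
  next
    case False
    then show ?thesis using wr_step.IH wr_step.prems(1) by blast
  qed
qed

lemma wr_trans:
  assumes "wr Ec ends S D m v"
  shows "wr Ec ends S D u m \<Longrightarrow> m \<notin> S \<Longrightarrow> wr Ec ends S D u v"
  using assms
proof (induction rule: wr.induct)
  case (wr_base e)
  then show ?case using wr_step[of Ec ends S D u "tailv ends D e" e] by blast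
next
  case (wr_step m' m'' e)
  then show ?case using wr.wr_step[of Ec ends S D u m'' e] by blast
qed

lemma tail_cmap: "tailv (cends ends S w) D e = cmap S w (tailv ends D e)"
  by (simp add: tailv_def cends_def map_prod_def split_beta)

lemma head_cmap: "headv (cends ends S w) D e = cmap S w (headv ends D e)"
  by (simp add: headv_def cends_def map_prod_def split_beta)

lemma rep2k_mod: "rep2k k r mod (2 * int k) = r mod (2 * int k)"
  by (simp add: rep2k_def Let_def)

locale contr =
  fixes VG :: "'v set" and EG :: "'f set" and endsG :: "'f \<Rightarrow> 'v \<times> 'v"
    and S :: "'v set" and w :: 'v and D :: "'f \<Rightarrow> bool"
  assumes mg: "mgraph VG EG endsG" and SV: "S \<subseteq> VG" and wS: "w \<in> S"
    and sc: "strongly_conn (cverts VG S w) (cedges EG endsG S) (cends endsG S w) D"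
begin

abbreviation "Ec \<equiv> cedges EG endsG S"
abbreviation "Vc \<equiv> cverts VG S w"
abbreviation "wrr \<equiv> wr Ec endsG S D"

lemma finVG: "finite VG" and finEG: "finite EG" using mg unfolding mgraph_def by auto

lemma ends_in: "e \<in> EG \<Longrightarrow> fst (endsG e) \<in> VG \<and> snd (endsG e) \<in> VG \<and> fst (endsG e) \<noteq> snd (endsG e)"
  using mg unfolding mgraph_def by blast

lemma th_in: "e \<in> EG \<Longrightarrow> tailv endsG D' e \<in> VG \<and> headv endsG D' e \<in> VG \<and> tailv endsG D' e \<noteq> headv endsG D' e"
  using ends_in[of e] by (auto simp: tailv_def headv_def)

lemma Ec_sub: "Ec \<subseteq> EG" by (auto simp: cedges_def)

lemma Ec_mem: "e \<in> Ec \<longleftrightarrow> e \<in> EG \<and> \<not> (fst (endsG e) \<in> S \<and> snd (endsG e) \<in> S)"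
  by (simp add: cedges_def)

lemma notEc_th: "e \<in> EG \<Longrightarrow> e \<notin> Ec \<Longrightarrow> tailv endsG D' e \<in> S \<and> headv endsG D' e \<in> S"
  using Ec_mem[of e] by (auto simp: tailv_def headv_def)

lemma Ec_th: "e \<in> Ec \<Longrightarrow> \<not> (tailv endsG D' e \<in> S \<and> headv endsG D' e \<in> S)"
  using Ec_mem[of e] by (auto simp: tailv_def headv_def)

lemma cmap_in: "x \<notin> S \<Longrightarrow> cmap S w x = x" by (simp add: cmap_def)
lemma cmap_S: "x \<in> S \<Longrightarrow> cmap S w x = w" by (simp add: cmap_def)

lemma w_notin: "x \<notin> S \<Longrightarrow> x \<noteq> w" using wS by blast

lemma sc1: "T \<subseteq> Vc \<Longrightarrow> T \<noteq> {} \<Longrightarrow> T \<noteq> Vc \<Longrightarrow>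
   \<exists>e\<in>Ec. tailv (cends endsG S w) D e \<in> T \<and> headv (cends endsG S w) D e \<notin> T"
  using sc unfolding strongly_conn_def by blast

lemma sc2: "T \<subseteq> Vc \<Longrightarrow> T \<noteq> {} \<Longrightarrow> T \<noteq> Vc \<Longrightarrow>
   \<exists>e\<in>Ec. headv (cends endsG S w) D e \<in> T \<and> tailv (cends endsG S w) D e \<notin> T"
  using sc unfolding strongly_conn_def by blast

lemma claimA:
  assumes q: "q \<in> VG" "q \<notin> S"
  shows "\<exists>s\<in>S. wrr q s"
proof (rule ccontr)
  assume nA: "\<not> (\<exists>s\<in>S. wrr q s)"
  define Tc where "Tc = insert q {v \<in> VG - S. wrr q v}"
  have Tsub: "Tc \<subseteq> Vc" using q unfolding Tc_def cverts_def by auto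
  have "w \<notin> Tc" using wS q unfolding Tc_def by auto
  moreover have "w \<in> Vc" unfolding cverts_def by simp
  ultimately have "Tc \<noteq> Vc" by blast
  moreover have "Tc \<noteq> {}" unfolding Tc_def by simp
  ultimately obtain e where e: "e \<in> Ec" "tailv (cends endsG S w) D e \<in> Tc"
      "headv (cends endsG S w) D e \<notin> Tc"
    using sc1[OF Tsub] by blast
  define t where "t = tailv endsG D e"
  define h where "h = headv endsG D e"
  have eG: "e \<in> EG" using e(1) Ec_sub by blast
  have tS: "t \<notin> S"
  proof
    assume "t \<in> S"
    then have "cmap S w t = w" by (rule cmap_S)
    then show False using e(2) \<open>w \<notin> Tc\<close> unfolding tail_cmap t_def by simp
  qed
  then have tT: "t \<in> Tc" using e(2) unfolding tail_cmap t_def by (simp add: cmap_in)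
  have "wrr q h"
  proof (cases "t = q")
    case True
    then show ?thesis using wr_base[OF e(1), of endsG S D] unfolding t_def h_def by simp
  next
    case False
    then have "wrr q t" using tT unfolding Tc_def by simp
    then show ?thesis using wr_step[OF _ tS e(1)] unfolding t_def h_def by blast
  qed
  moreover have "h \<in> VG" using th_in[OF eG] unfolding h_def by blast
  ultimately have "h \<in> S \<or> h \<in> Tc" unfolding Tc_def by blast
  moreover have "h \<notin> S" using nA \<open>wrr q h\<close> by blast
  moreover have "h \<notin> Tc" using e(3) \<open>h \<notin> S\<close> unfolding head_cmap h_def by (simp add: cmap_in)
  ultimately show False by blast
qed

lemma claimB:
  assumes q: "q \<in> VG" "q \<notin> S"
  shows "\<exists>s\<in>S. wrr s q"
proof (rule ccontr)
  assume nB: "\<not> (\<exists>s\<in>S. wrr s q)"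
  define Tc where "Tc = insert q {v \<in> VG - S. wrr v q}"
  have Tsub: "Tc \<subseteq> Vc" using q unfolding Tc_def cverts_def by auto
  have "w \<notin> Tc" using wS q unfolding Tc_def by auto
  moreover have "w \<in> Vc" unfolding cverts_def by simp
  ultimately have "Tc \<noteq> Vc" by blast
  moreover have "Tc \<noteq> {}" unfolding Tc_def by simp
  ultimately obtain e where e: "e \<in> Ec" "headv (cends endsG S w) D e \<in> Tc"
      "tailv (cends endsG S w) D e \<notin> Tc"
    using sc2[OF Tsub] by blast
  define t where "t = tailv endsG D e"
  define h where "h = headv endsG D e"
  have eG: "e \<in> EG" using e(1) Ec_sub by blast
  have hS: "h \<notin> S"
  proof
    assume "h \<in> S"
    then have "cmap S w h = w" by (rule cmap_S)
    then show False using e(2) \<open>w \<notin> Tc\<close> unfolding head_cmap h_def by simp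
  qed
  then have hT: "h \<in> Tc" using e(2) unfolding head_cmap h_def by (simp add: cmap_in)
  have th: "wrr t h" using wr_base[OF e(1), of endsG S D] unfolding t_def h_def by simp
  have "wrr t q"
  proof (cases "h = q")
    case True
    then show ?thesis using th by simp
  next
    case False
    then have "wrr h q" using hT unfolding Tc_def by simp
    then show ?thesis using wr_trans th hS by metis
  qed
  moreover have "t \<in> VG" using th_in[OF eG] unfolding t_def by blast
  ultimately have "t \<in> S \<or> t \<in> Tc" unfolding Tc_def by blast
  moreover have "t \<notin> S" using nB \<open>wrr t q\<close> by blast
  moreover have "t \<notin> Tc" using e(3) \<open>t \<notin> S\<close> unfolding tail_cmap t_def by (simp add: cmap_in)
  ultimately show False by blast
qed

end



context contr begin

lemma nice_pair:
  assumes noF: "\<forall>e\<in>EG - EH. \<not> (fst (endsG e) \<in> S \<and> snd (endsG e) \<in> S)"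
    and xy: "x \<in> S" "y \<in> S" "x \<noteq> y" "(x, y) \<in> (adj (EG - EH) endsG)\<^sup>*"
  shows "\<exists>a\<in>S. \<exists>b\<in>S. a \<noteq> b \<and> wrr a b"
proof (rule ccontr)
  assume "\<not> (\<exists>a\<in>S. \<exists>b\<in>S. a \<noteq> b \<and> wrr a b)"
  then have H0: "\<And>a b. a \<in> S \<Longrightarrow> b \<in> S \<Longrightarrow> wrr a b \<Longrightarrow> a = b" by blast
  define c where "c q = (SOME s. s \<in> S \<and> wrr s q)" for q
  have c1: "c q \<in> S \<and> wrr (c q) q" if "q \<in> VG" "q \<notin> S" for q
  proof -
    have "\<exists>s. s \<in> S \<and> wrr s q" using claimB[OF that] by blast
    then show ?thesis unfolding c_def by (rule someI_ex)
  qed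
  have ci: "s = c q" if that': "q \<in> VG" "q \<notin> S" "s \<in> S" "wrr s q" for q s
  proof -
    obtain s' where s': "s' \<in> S" "wrr q s'" using claimA[OF that'(1,2)] by blast
    have "wrr s s'" using wr_trans[OF s'(2) that'(4) that'(2)] .
    then have e1: "s = s'" using H0 that'(3) s'(1) by blast
    have "wrr (c q) s'" using wr_trans[OF s'(2) conjunct2[OF c1[OF that'(1,2)]] that'(2)] .
    then have "c q = s'" using H0 c1[OF that'(1,2)] s'(1) by blast
    then show ?thesis using e1 by simp
  qed
  have cii: "s = c q" if that': "q \<in> VG" "q \<notin> S" "s \<in> S" "wrr q s" for q s
  proof -
    have "wrr (c q) s" using wr_trans[OF that'(4) conjunct2[OF c1[OF that'(1,2)]] that'(2)] .
    then have "c q = s" using H0 c1[OF that'(1,2)] that'(3) by blast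
    then show ?thesis by simp
  qed
  define \<phi> where "\<phi> z = (if z \<in> S then z else c z)" for z
  have edge: "\<phi> (tailv endsG D e) = \<phi> (headv endsG D e)" if e: "e \<in> EG - EH" for e
  proof -
    define t where "t = tailv endsG D e"
    define h where "h = headv endsG D e"
    have eG: "e \<in> EG" using e by blast
    have eEc: "e \<in> Ec" using Ec_mem[of e] noF e by blast
    have th: "wrr t h" using wr_base[OF eEc, of endsG S D] unfolding t_def h_def by simp
    have tV: "t \<in> VG" "h \<in> VG" using th_in[OF eG, of D] unfolding t_def h_def by auto
    have nb: "\<not> (t \<in> S \<and> h \<in> S)" using Ec_th[OF eEc, of D] unfolding t_def h_def by simp
    have "\<phi> t = \<phi> h"
    proof (cases "t \<in> S")
      case True
      then have hS: "h \<notin> S" using nb by blast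
      have "t = c h" using ci[OF tV(2) hS True th] .
      then show ?thesis using True hS unfolding \<phi>_def by simp
    next
      case False
      show ?thesis
      proof (cases "h \<in> S")
        case True
        have "h = c t" using cii[OF tV(1) False True th] .
        then show ?thesis using True False unfolding \<phi>_def by simp
      next
        case False2: False
        have cc: "c t \<in> S" "wrr (c t) t" using c1[OF tV(1) False] by auto
        have "wrr (c t) h" using wr_trans[OF th cc(2) False] .
        then have "c t = c h" using ci[OF tV(2) False2 cc(1)] by simp
        then show ?thesis using False False2 unfolding \<phi>_def by simp
      qed
    qed
    then show ?thesis unfolding t_def h_def .
  qed
  have stp: "\<phi> z1 = \<phi> z2" if "(z1, z2) \<in> adj (EG - EH) endsG" for z1 z2
  proof -
    from that obtain e where e: "e \<in> EG - EH" "joins endsG e z1 z2" unfolding adj_def by blast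
    have "(tailv endsG D e = z1 \<and> headv endsG D e = z2) \<or> (tailv endsG D e = z2 \<and> headv endsG D e = z1)"
      using e(2) unfolding joins_def tailv_def headv_def by auto
    then show ?thesis using edge[OF e(1)] by auto
  qed
  have "\<phi> z = \<phi> x" if "(x, z) \<in> (adj (EG - EH) endsG)\<^sup>*" for z
    using that
  proof (induction rule: rtrancl_induct)
    case base
    then show ?case by simp
  next
    case (step z1 z2)
    then show ?case using stp[OF step.hyps(2)] by simp
  qed
  then have "\<phi> y = \<phi> x" using xy(4) by blast
  then show False using xy unfolding \<phi>_def by simp
qed

lemma leaving_outer:
  assumes T: "T \<subseteq> VG" "T \<noteq> {}" "T \<noteq> VG" and ST: "S \<subseteq> T \<or> S \<inter> T = {}"
  shows "\<exists>e\<in>Ec. tailv endsG D e \<in> T \<and> headv endsG D e \<notin> T"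
proof (cases "S \<subseteq> T")
  case sT: True
  define Tc where "Tc = (T - S) \<union> {w}"
  have Tsub: "Tc \<subseteq> Vc" using T unfolding Tc_def cverts_def by auto
  obtain v where v: "v \<in> VG" "v \<notin> T" using T by blast
  have vS: "v \<notin> S" using v sT by blast
  then have "v \<in> Vc" "v \<notin> Tc" using v w_notin[OF vS] unfolding Tc_def cverts_def by auto
  then have "Tc \<noteq> Vc" by blast
  moreover have "Tc \<noteq> {}" unfolding Tc_def by simp
  ultimately obtain e where e: "e \<in> Ec" "tailv (cends endsG S w) D e \<in> Tc"
      "headv (cends endsG S w) D e \<notin> Tc"
    using sc1[OF Tsub] by blast
  define t where "t = tailv endsG D e"
  define h where "h = headv endsG D e"
  have "t \<in> T"
  proof (cases "t \<in> S")
    case True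
    then show ?thesis using sT by blast
  next
    case False
    then have "t \<in> Tc" using e(2) unfolding tail_cmap t_def by (simp add: cmap_in)
    then show ?thesis using False w_notin[OF False] unfolding Tc_def by auto
  qed
  moreover have "h \<notin> T"
  proof -
    have hS: "h \<notin> S"
    proof
      assume "h \<in> S"
      then have "cmap S w h = w" by (rule cmap_S)
      then show False using e(3) unfolding head_cmap h_def Tc_def by simp
    qed
    then have "h \<notin> Tc" using e(3) unfolding head_cmap h_def by (simp add: cmap_in)
    then show ?thesis using hS unfolding Tc_def by auto
  qed
  ultimately show ?thesis using e(1) unfolding t_def h_def by blast
next
  case False
  then have dis: "S \<inter> T = {}" using ST by blast
  have Tsub: "T \<subseteq> Vc" using T dis unfolding cverts_def by auto
  have "w \<notin> T" using wS dis by blast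
  moreover have "w \<in> Vc" unfolding cverts_def by simp
  ultimately have "T \<noteq> Vc" by blast
  then obtain e where e: "e \<in> Ec" "tailv (cends endsG S w) D e \<in> T"
      "headv (cends endsG S w) D e \<notin> T"
    using sc1[OF Tsub T(2)] by blast
  define t where "t = tailv endsG D e"
  define h where "h = headv endsG D e"
  have tS: "t \<notin> S"
  proof
    assume "t \<in> S"
    then have "cmap S w t = w" by (rule cmap_S)
    then show False using e(2) \<open>w \<notin> T\<close> unfolding tail_cmap t_def by simp
  qed
  then have "t \<in> T" using e(2) unfolding tail_cmap t_def by (simp add: cmap_in)
  moreover have "h \<notin> T"
  proof (cases "h \<in> S")
    case True
    then show ?thesis using dis by blast
  next
    case False
    then show ?thesis using e(3) unfolding head_cmap h_def by (simp add: cmap_in)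
  qed
  ultimately show ?thesis using e(1) unfolding t_def h_def by blast
qed

lemma finEc: "finite Ec" by (rule finite_subset[OF Ec_sub finEG])
lemma finS: "finite S" by (rule finite_subset[OF SV finVG])

lemma netflow_outside:
  assumes v: "v \<in> VG" "v \<notin> S" and DD: "\<forall>e\<in>Ec. D' e = D e"
  shows "netflow EG endsG D' v = netflow Ec (cends endsG S w) D v"
proof -
  have a: "netflow EG endsG D' v = netflow Ec endsG D' v + netflow (EG - Ec) endsG D' v"
    by (rule netflow_split[OF finEG Ec_sub])
  have z: "sig endsG D' e v = 0" if "e \<in> EG - Ec" for e
    using notEc_th[of e D'] that v(2) unfolding sig_def by auto
  have b: "netflow (EG - Ec) endsG D' v = 0"
    unfolding netflow_sum[OF finite_Diff[OF finEG]] by (rule sum.neutral) (use z in blast)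
  have c: "netflow Ec endsG D' v = netflow Ec endsG D v" by (rule netflow_cong[OF finEc DD])
  have cm: "cmap S w x = v \<longleftrightarrow> x = v" for x using v(2) w_notin[OF v(2)] by (auto simp: cmap_def)
  have "sig endsG D e v = sig (cends endsG S w) D e v" for e
    unfolding sig_def tail_cmap head_cmap cm by simp
  then have d: "netflow Ec endsG D v = netflow Ec (cends endsG S w) D v"
    by (simp add: netflow_sum[OF finEc])
  show ?thesis using a b c d by simp
qed

lemma netflow_w: "netflow Ec (cends endsG S w) D w = (\<Sum>z\<in>S. netflow Ec endsG D z)"
proof -
  have a: "(\<Sum>z\<in>S. netflow Ec endsG D z) = (\<Sum>e\<in>Ec. (if tailv endsG D e \<in> S then 1 else 0) - (if headv endsG D e \<in> S then 1 else 0))"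
    by (rule netflow_total[OF finEc finS])
  have cm: "cmap S w x = w \<longleftrightarrow> x \<in> S" for x using w_notin[of x] by (auto simp: cmap_def)
  have "sig (cends endsG S w) D e w = (if tailv endsG D e \<in> S then 1 else 0) - (if headv endsG D e \<in> S then 1 else 0)" for e
    unfolding sig_def tail_cmap head_cmap cm by simp
  then show ?thesis using a by (simp add: netflow_sum[OF finEc])
qed

end



lemma inj_on_Inl': "inj_on Inl A" by (simp add: inj_on_def)

lemma part2_core:
  fixes V :: "'a set" and E :: "'e set" and ends :: "'e \<Rightarrow> 'a \<times> 'a"
    and VG :: "('a + nat) set" and EG :: "('e + nat) set" and endsG :: "'e + nat \<Rightarrow> ('a + nat) \<times> ('a + nat)"
  assumes k: "odd k" and H: "mgraph V E ends"
    and HP: "\<forall>x\<in>V. \<forall>y\<in>V. x \<noteq> y \<longrightarrow> (\<exists>P. ham_path V E ends x y P \<and> SZ k V (E - P) ends)"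
    and mg: "mgraph VG EG endsG" and VsG: "Inl ` V \<subseteq> VG" and EsG: "Inl ` E \<subseteq> EG"
    and endsI: "\<forall>e\<in>E. endsG (Inl e) = map_prod Inl Inl (ends e)"
    and nice: "\<exists>x\<in>V. \<exists>y\<in>V. x \<noteq> y \<and> (Inl x, Inl y) \<in> (adj (EG - Inl ` E) endsG)\<^sup>*"
    and pc: "pc_boundary k VG EG endsG \<beta>"
    and OR0: "orient2k k (cverts VG (Inl ` V) (Inl (SOME x. x \<in> V))) (cedges EG endsG (Inl ` V))
       (cends endsG (Inl ` V) (Inl (SOME x. x \<in> V))) (cbeta k (Inl ` V) (Inl (SOME x. x \<in> V)) \<beta>) D"
    and SC0: "strongly_conn (cverts VG (Inl ` V) (Inl (SOME x. x \<in> V))) (cedges EG endsG (Inl ` V))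
       (cends endsG (Inl ` V) (Inl (SOME x. x \<in> V))) D"
  shows "\<exists>D'. (\<forall>e\<in>cedges EG endsG (Inl ` V). D' e = D e) \<and>
           orient2k k VG EG endsG \<beta> D' \<and> strongly_conn VG EG endsG D'"
proof -
  define S :: "('a + nat) set" where "S = Inl ` V"
  define w :: "'a + nat" where "w = Inl (SOME x. x \<in> V)"
  have OR: "orient2k k (cverts VG S w) (cedges EG endsG S) (cends endsG S w) (cbeta k S w \<beta>) D"
    using OR0 unfolding S_def w_def .
  have SCc: "strongly_conn (cverts VG S w) (cedges EG endsG S) (cends endsG S w) D"
    using SC0 unfolding S_def w_def .
  obtain x0 y0 where x0y0: "x0 \<in> V" "y0 \<in> V" "x0 \<noteq> y0" "(Inl x0, Inl y0) \<in> (adj (EG - Inl ` E) endsG)\<^sup>*"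
    using nice by blast
  have "(SOME x. x \<in> V) \<in> V" using x0y0(1) by (rule someI)
  then have wS: "w \<in> S" unfolding w_def S_def by blast
  have SV: "S \<subseteq> VG" using VsG unfolding S_def .
  interpret C: contr VG EG endsG S w D
    by unfold_locales (use mg SV wS SCc in auto)
  let ?Ec = "cedges EG endsG S"
  let ?F = "EG - ?Ec - Inl ` E"
  have finV: "finite V" and finE: "finite E" using H unfolding mgraph_def by auto
  have Hl: "\<forall>e\<in>E. fst (ends e) \<in> V \<and> snd (ends e) \<in> V \<and> fst (ends e) \<noteq> snd (ends e)"
    using H unfolding mgraph_def by blast
  have inlS: "fst (endsG (Inl h)) \<in> S \<and> snd (endsG (Inl h)) \<in> S" if "h \<in> E" for h
    using endsI that Hl unfolding S_def by auto
  have InlE_notEc: "Inl h \<notin> ?Ec" if "h \<in> E" for h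
    using inlS[OF that] C.Ec_mem by blast
  have Fchar: "e \<in> ?F \<Longrightarrow> fst (endsG e) \<in> S \<and> snd (endsG e) \<in> S" for e
    using C.Ec_mem[of e] by blast
  obtain x y Fo where xy: "x \<in> V" "y \<in> V" "x \<noteq> y"
    and ret: "\<And>D'' (T :: ('a + nat) set). \<forall>e\<in>?Ec. D'' e = D e \<Longrightarrow> \<forall>e\<in>?F. D'' e = Fo e \<Longrightarrow> Inl y \<in> T \<Longrightarrow> Inl x \<notin> T
        \<Longrightarrow> \<exists>e\<in>EG. tailv endsG D'' e \<in> T \<and> headv endsG D'' e \<notin> T"
  proof (cases "\<exists>f\<in>EG - Inl ` E. fst (endsG f) \<in> S \<and> snd (endsG f) \<in> S")
    case True
    then obtain f where f: "f \<in> EG" "f \<notin> Inl ` E" "fst (endsG f) \<in> S" "snd (endsG f) \<in> S" by blast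
    obtain a where a: "a \<in> V" "fst (endsG f) = Inl a" using f(3) unfolding S_def by blast
    obtain b where b: "b \<in> V" "snd (endsG f) = Inl b" using f(4) unfolding S_def by blast
    have "a \<noteq> b" using C.ends_in[OF f(1)] a b by auto
    have fF: "f \<in> ?F" using f C.Ec_mem[of f] by blast
    show ?thesis
    proof (rule that[of a b "\<lambda>e. e \<noteq> f"])
      show "a \<in> V" "b \<in> V" "a \<noteq> b" by fact+
      fix D'' and T :: "('a + nat) set"
      assume h1: "\<forall>e\<in>?F. D'' e = (e \<noteq> f)" and h2: "Inl b \<in> T" "Inl a \<notin> T"
      have "D'' f = False" using h1 fF by blast
      then have "tailv endsG D'' f = Inl b" "headv endsG D'' f = Inl a"
        using a b by (simp_all add: tailv_def headv_def)
      then show "\<exists>e\<in>EG. tailv endsG D'' e \<in> T \<and> headv endsG D'' e \<notin> T" using f(1) h2 by metis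
    qed
  next
    case False
    then have noF: "\<forall>e\<in>EG - Inl ` E. \<not> (fst (endsG e) \<in> S \<and> snd (endsG e) \<in> S)" by blast
    have i3: "Inl x0 \<in> S" "Inl y0 \<in> S" "Inl x0 \<noteq> Inl y0" using x0y0 unfolding S_def by auto
    have "\<exists>a\<in>S. \<exists>b\<in>S. a \<noteq> b \<and> wr ?Ec endsG S D a b"
      by (rule C.nice_pair[OF noF i3 x0y0(4)])
    then obtain a b where ab: "a \<in> S" "b \<in> S" "a \<noteq> b" "wr ?Ec endsG S D a b"
      by blast
    obtain ya where ya: "ya \<in> V" "a = Inl ya" using ab(1) unfolding S_def by blast
    obtain xb where xb: "xb \<in> V" "b = Inl xb" using ab(2) unfolding S_def by blast
    show ?thesis
    proof (rule that[of xb ya "\<lambda>e. True"])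
      show "xb \<in> V" "ya \<in> V" using xb ya by auto
      show "xb \<noteq> ya" using ab(3) xb ya by auto
      fix D'' and T :: "('a + nat) set"
      assume h0: "\<forall>e\<in>?Ec. D'' e = D e" and h2: "Inl ya \<in> T" "Inl xb \<notin> T"
      have abT: "a \<in> T" "b \<notin> T" using h2 ya xb by auto
      obtain e where e: "e \<in> ?Ec" "tailv endsG D e \<in> T" "headv endsG D e \<notin> T"
        using wr_cut[OF ab(4) abT] by blast
      have "tailv endsG D'' e = tailv endsG D e" "headv endsG D'' e = headv endsG D e"
        using h0 e(1) by (simp_all add: tailv_def headv_def)
      then show "\<exists>e\<in>EG. tailv endsG D'' e \<in> T \<and> headv endsG D'' e \<notin> T"
        using e C.Ec_sub by (metis subsetD)
    qed
  qed

  obtain P where hp: "ham_path V E ends x y P" and SZP: "SZ k V (E - P) ends"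
    using HP xy by blast
  obtain vs es where vne: "vs \<noteq> []" and dvs: "distinct vs" and svs: "set vs = V"
    and hdx: "hd vs = x" and lsy: "last vs = y" and les: "length es + 1 = length vs"
    and sE: "set es \<subseteq> E" and sP: "set es = P"
    and jn: "\<forall>i<length es. joins ends (es ! i) (vs ! i) (vs ! (i + 1))"
    using hp unfolding ham_path_def
    apply (elim exE conjE) apply (rule that) apply assumption+ done
  define Po where "Po h = (\<exists>i<length es. es ! i = h \<and> ends h = (vs ! i, vs ! (Suc i)))" for h
  have pth: "tailv ends Po (es ! m) = vs ! m \<and> headv ends Po (es ! m) = vs ! (Suc m)"
    if m: "m < length es" for m
  proof -
    have j: "joins ends (es ! m) (vs ! m) (vs ! (m + 1))" using jn m by blast
    show ?thesis
    proof (cases "ends (es ! m) = (vs ! m, vs ! (Suc m))")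
      case True
      then have "Po (es ! m)" unfolding Po_def using m by blast
      then show ?thesis using True by (simp add: tailv_def headv_def)
    next
      case False
      then have e2: "ends (es ! m) = (vs ! (Suc m), vs ! m)" using j by (simp add: joins_def)
      have "\<not> Po (es ! m)"
      proof
        assume "Po (es ! m)"
        then obtain i where i: "i < length es" "es ! i = es ! m" "ends (es ! m) = (vs ! i, vs ! (Suc i))"
          unfolding Po_def by blast
        have q1: "vs ! i = vs ! (Suc m)" and q2: "vs ! (Suc i) = vs ! m" using i(3) e2 by simp_all
        have "i = Suc m" using q1 dvs i(1) m les by (simp add: nth_eq_iff_index_eq)
        moreover have "Suc i = m" using q2 dvs i(1) m les by (simp add: nth_eq_iff_index_eq)
        ultimately show False by simp
      qed
      then show ?thesis using e2 by (simp add: tailv_def headv_def)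
    qed
  qed
  have PE: "P \<subseteq> E" using sE sP by simp
  have finP: "finite P" using finite_subset[OF PE finE] .
  have finEc: "finite ?Ec" by (rule C.finEc)
  have finF: "finite ?F" using C.finEG by simp
  have finS: "finite S" by (rule C.finS)
  define \<gamma> where "\<gamma> u = \<beta> (Inl u) - netflow ?Ec endsG D (Inl u) - netflow ?F endsG Fo (Inl u)
     - netflow P ends Po u" for u
  have reidx: "(\<Sum>u\<in>V. f (Inl u)) = (\<Sum>z\<in>S. f z)" for f :: "'a + nat \<Rightarrow> int"
    using sum.reindex[OF inj_on_Inl'[of V], of f] unfolding S_def by (simp add: o_def)
  have s1: "(\<Sum>u\<in>V. netflow ?Ec endsG D (Inl u)) = netflow ?Ec (cends endsG S w) D w"
    using reidx C.netflow_w by simp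
  have s2: "(\<Sum>u\<in>V. netflow ?F endsG Fo (Inl u)) = 0"
  proof -
    have "(\<Sum>z\<in>S. netflow ?F endsG Fo z) = 0"
      by (rule netflow_total0[OF finF finS]) (use Fchar in blast)
    then show ?thesis using reidx by simp
  qed
  have s3: "(\<Sum>u\<in>V. netflow P ends Po u) = 0"
    by (rule netflow_total0[OF finP finV]) (use PE Hl in blast)
  have s0: "(\<Sum>u\<in>V. \<beta> (Inl u)) = (\<Sum>z\<in>S. \<beta> z)" by (rule reidx)
  have wVc: "w \<in> cverts VG S w" unfolding cverts_def by simp
  have "netflow ?Ec (cends endsG S w) D w mod (2 * int k) = cbeta k S w \<beta> w mod (2 * int k)"
    using OR wVc unfolding orient2k_def by blast
  also have "\<dots> = (\<Sum>z\<in>S. \<beta> z) mod (2 * int k)" by (simp add: cbeta_def rep2k_mod)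
  finally have nw: "netflow ?Ec (cends endsG S w) D w mod (2 * int k) = (\<Sum>z\<in>S. \<beta> z) mod (2 * int k)" .
  have sg: "(\<Sum>u\<in>V. \<gamma> u) = (\<Sum>z\<in>S. \<beta> z) - netflow ?Ec (cends endsG S w) D w"
    unfolding \<gamma>_def using s0 s1 s2 s3 by (simp add: sum_subtractf)
  have "(\<Sum>u\<in>V. \<gamma> u) mod (2 * int k) = 0"
    unfolding sg using nw by (metis mod_eq_dvd_iff dvd_imp_mod_0)
  then have g0: "(\<Sum>u\<in>V. \<gamma> u) mod int k = 0" using mod_from_2k[of _ k 0] by simp
  obtain R where R: "\<forall>v\<in>V. netflow (E - P) ends R v mod int k = \<gamma> v mod int k"
    using SZP[unfolded SZ_def, rule_format, OF g0] by (elim exE)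
  define Hor where "Hor h = (if h \<in> P then Po h else R h)" for h
  define D' where "D' e = (if e \<in> ?Ec then D e else if e \<in> Inl ` E then Hor (projl e) else Fo e)" for e
  have D'Ec: "\<forall>e\<in>?Ec. D' e = D e" unfolding D'_def by simp
  have D'F: "\<forall>e\<in>?F. D' e = Fo e" unfolding D'_def by simp
  have D'I: "D' (Inl h) = Hor h" if "h \<in> E" for h
    using InlE_notEc[OF that] that unfolding D'_def by simp
  have tail_inl: "tailv endsG D' (Inl h) = Inl (tailv ends Hor h) \<and> headv endsG D' (Inl h) = Inl (headv ends Hor h)"
    if h: "h \<in> E" for h
    using D'I[OF h] endsI h by (simp add: tailv_def headv_def)
  have netI: "netflow (Inl ` E) endsG D' (Inl u) = netflow E ends Hor u" for u
  proof -
    have "sig endsG D' (Inl h) (Inl u) = sig ends Hor h u" if h: "h \<in> E" for h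
      using tail_inl[OF h] unfolding sig_def by simp
    then have "(\<Sum>h\<in>E. sig endsG D' (Inl h) (Inl u)) = (\<Sum>h\<in>E. sig ends Hor h u)"
      by (rule sum.cong[OF refl])
    moreover have "(\<Sum>e\<in>Inl ` E. sig endsG D' e (Inl u)) = (\<Sum>h\<in>E. sig endsG D' (Inl h) (Inl u))"
      using sum.reindex[OF inj_on_Inl'[of E], of "\<lambda>e. sig endsG D' e (Inl u)"] by (simp add: o_def)
    ultimately show ?thesis using finE by (simp add: netflow_sum)
  qed
  have netH: "netflow E ends Hor u = netflow P ends Po u + netflow (E - P) ends R u" for u
  proof -
    have "netflow P ends Hor u = netflow P ends Po u"
      by (rule netflow_cong[OF finP]) (simp add: Hor_def)
    moreover have "netflow (E - P) ends Hor u = netflow (E - P) ends R u"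
      by (rule netflow_cong) (use finE in \<open>simp_all add: Hor_def\<close>)
    moreover have "netflow E ends Hor u = netflow P ends Hor u + netflow (E - P) ends Hor u"
      by (rule netflow_split[OF finE PE])
    ultimately show ?thesis by simp
  qed
  have IEsub: "Inl ` E \<subseteq> EG - ?Ec" using EsG InlE_notEc by blast
  have decomp: "netflow EG endsG D' z = netflow ?Ec endsG D z + netflow ?F endsG Fo z + netflow (Inl ` E) endsG D' z" for z
  proof -
    have a: "netflow EG endsG D' z = netflow ?Ec endsG D' z + netflow (EG - ?Ec) endsG D' z"
      by (rule netflow_split[OF C.finEG C.Ec_sub])
    have b: "netflow (EG - ?Ec) endsG D' z = netflow (Inl ` E) endsG D' z + netflow ?F endsG D' z"
      by (rule netflow_split[OF _ IEsub]) (use C.finEG in simp)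
    have c: "netflow ?Ec endsG D' z = netflow ?Ec endsG D z" by (rule netflow_cong[OF finEc D'Ec])
    have d: "netflow ?F endsG D' z = netflow ?F endsG Fo z" by (rule netflow_cong[OF finF D'F])
    show ?thesis using a b c d by simp
  qed
  have GL: "\<forall>e\<in>EG. fst (endsG e) \<noteq> snd (endsG e)" using C.ends_in by blast
  have ori: "orient2k k VG EG endsG \<beta> D'"
    unfolding orient2k_def
  proof
    fix z assume zV: "z \<in> VG"
    show "netflow EG endsG D' z mod (2 * int k) = \<beta> z mod (2 * int k)"
    proof (cases "z \<in> S")
      case False
      have "netflow EG endsG D' z = netflow ?Ec (cends endsG S w) D z"
        by (rule C.netflow_outside[OF zV False D'Ec])
      moreover have "z \<in> cverts VG S w" using zV False unfolding cverts_def by simp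
      moreover have "z \<noteq> w" using False wS by blast
      ultimately show ?thesis using OR unfolding orient2k_def cbeta_def by simp
    next
      case True
      then obtain u where u: "u \<in> V" "z = Inl u" unfolding S_def by blast
      have tot: "netflow EG endsG D' z = (netflow ?Ec endsG D z + netflow ?F endsG Fo z + netflow P ends Po u)
          + netflow (E - P) ends R u"
        using decomp[of z] netI[of u] netH[of u] u(2) by simp
      have "netflow EG endsG D' z mod int k = \<beta> z mod int k"
        unfolding tot
      proof (rule modk_add)
        show "netflow (E - P) ends R u mod int k =
          (\<beta> z - (netflow ?Ec endsG D z + netflow ?F endsG Fo z + netflow P ends Po u)) mod int k"
          using R u unfolding \<gamma>_def by (simp add: algebra_simps)
      qed
      moreover have "netflow EG endsG D' z mod 2 = \<beta> z mod 2"
      proof -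
        have "\<beta> z mod 2 = int (degree EG endsG z) mod 2" using pc zV unfolding pc_boundary_def by blast
        then show ?thesis using netflow_parity[OF C.finEG GL, of D' z] by simp
      qed
      ultimately show ?thesis using crt2 k by blast
    qed
  qed
  have pathedge: "\<exists>e\<in>EG. tailv endsG D' e \<in> T \<and> headv endsG D' e \<notin> T"
    if m: "m < length es" "Inl (vs ! m) \<in> T" "Inl (vs ! Suc m) \<notin> T" for m T
  proof -
    have em: "es ! m \<in> E" "es ! m \<in> P" using m(1) sE sP by auto
    have "Hor (es ! m) = Po (es ! m)" using em(2) by (simp add: Hor_def)
    then have "tailv ends Hor (es ! m) = vs ! m" "headv ends Hor (es ! m) = vs ! Suc m"
      using pth[OF m(1)] by (simp_all add: tailv_def headv_def)
    then have "tailv endsG D' (Inl (es ! m)) = Inl (vs ! m)" "headv endsG D' (Inl (es ! m)) = Inl (vs ! Suc m)"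
      using tail_inl[OF em(1)] by simp_all
    moreover have "Inl (es ! m) \<in> EG" using EsG em(1) by blast
    ultimately show ?thesis using m(2,3) by metis
  qed
  have GV: "\<forall>e\<in>EG. fst (endsG e) \<in> VG \<and> snd (endsG e) \<in> VG" using C.ends_in by blast
  have scon: "strongly_conn VG EG endsG D'"
  proof (rule sc_from_leaving[OF GV])
    fix T assume T: "T \<subseteq> VG" "T \<noteq> {}" "T \<noteq> VG"
    show "\<exists>e\<in>EG. tailv endsG D' e \<in> T \<and> headv endsG D' e \<notin> T"
    proof (cases "S \<subseteq> T \<or> S \<inter> T = {}")
      case True
      obtain e where e: "e \<in> ?Ec" "tailv endsG D e \<in> T" "headv endsG D e \<notin> T"
        using C.leaving_outer[OF T True] by blast
      have "tailv endsG D' e = tailv endsG D e" "headv endsG D' e = headv endsG D e"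
        using D'Ec e(1) by (simp_all add: tailv_def headv_def)
      moreover have "e \<in> EG" using e(1) C.Ec_sub by blast
      ultimately show ?thesis using e(2,3) by metis
    next
      case False
      then obtain z1 z2 where z: "z1 \<in> S" "z1 \<in> T" "z2 \<in> S" "z2 \<notin> T" by blast
      obtain u1 where u1: "u1 \<in> V" "z1 = Inl u1" using z(1) unfolding S_def by blast
      obtain u2 where u2: "u2 \<in> V" "z2 = Inl u2" using z(3) unfolding S_def by blast
      have "u1 \<in> set vs" using u1 svs by simp
      then obtain i where i: "i < length vs" "vs ! i = u1" by (metis in_set_conv_nth)
      have "u2 \<in> set vs" using u2 svs by simp
      then obtain j where j: "j < length vs" "vs ! j = u2" by (metis in_set_conv_nth)
      have ll: "length vs - 1 = length es" using les by simp
      have yl: "y = vs ! length es" using lsy last_conv_nth[OF vne] unfolding ll by simp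
      have x0': "x = vs ! 0" using hdx vne hd_conv_nth[OF vne] by simp
      show ?thesis
      proof (cases "Inl y \<in> T \<and> Inl x \<notin> T")
        case True
        then show ?thesis using ret[OF D'Ec D'F] by blast
      next
        case False
        show ?thesis
        proof (cases "Inl y \<in> T")
          case False
          have iT: "Inl (vs ! i) \<in> T" using i u1 z by simp
          have "i \<noteq> length es" using iT False yl by auto
          then have il: "i < length es" using i les by simp
          have "Inl (vs ! length es) \<notin> T" using False yl by simp
          then obtain m where "i \<le> m" "m < length es" "Inl (vs ! m) \<in> T" "Inl (vs ! Suc m) \<notin> T"
            using idx_step[of i "length es" "\<lambda>i. Inl (vs ! i)" T] il iT by auto
          then show ?thesis using pathedge by blast
        next
          case True
          then have xT: "Inl (vs ! 0) \<in> T" using \<open>\<not> (Inl y \<in> T \<and> Inl x \<notin> T)\<close> x0' by simp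
          have jT: "Inl (vs ! j) \<notin> T" using j u2 z by simp
          have "j \<noteq> 0" using xT jT by (cases j) auto
          then have j0: "0 < j" by simp
          then obtain m where "0 \<le> m" "m < j" "Inl (vs ! m) \<in> T" "Inl (vs ! Suc m) \<notin> T"
            using idx_step[of 0 j "\<lambda>i. Inl (vs ! i)" T] xT jT by auto
          moreover have "m < length es" using \<open>m < j\<close> j les by simp
          ultimately show ?thesis using pathedge by blast
        qed
      qed
    qed
  qed
  have "\<exists>D'. (\<forall>e\<in>?Ec. D' e = D e) \<and> orient2k k VG EG endsG \<beta> D' \<and> strongly_conn VG EG endsG D'"
    using D'Ec ori scon by blast
  then show ?thesis unfolding S_def .
qed


lemma no_pair_even:
  assumes "even k" "mgraph V E ends" "SZ k V (E - P) ends" "x \<in> V" "y \<in> V" "x \<noteq> y"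
  shows False
proof -
  have "finite V" "finite E" "\<forall>e\<in>E. fst (ends e) \<noteq> snd (ends e)" using assms(2) unfolding mgraph_def by auto
  then have "finite (E - P)" "\<forall>e\<in>E - P. fst (ends e) \<noteq> snd (ends e)" by auto
  then show False by (rule SZ_even_false[OF assms(3,1) \<open>finite V\<close> _ _ assms(4-6)])
qed

theorem proposition2p12:
  fixes V :: "'a set" and E :: "'e set" and ends :: "'e \<Rightarrow> 'a \<times> 'a" and k :: nat
  assumes "0 < k" and "mgraph V E ends"
  shows "((\<exists>C. ham_cycle V E ends C \<and> SZ k V (E - C) ends) \<longrightarrow> SC k V E ends) \<and>
         ((\<forall>x\<in>V. \<forall>y\<in>V. x \<noteq> y \<longrightarrow> (\<exists>P. ham_path V E ends x y P \<and> SZ k V (E - P) ends))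
            \<longrightarrow> WC k V E ends)"
proof (intro conjI impI)
  assume "\<exists>C. ham_cycle V E ends C \<and> SZ k V (E - C) ends"
  then obtain C where hc: "ham_cycle V E ends C" and sz: "SZ k V (E - C) ends" by blast
  show "SC k V E ends"
  proof (cases "odd k")
    case True
    show ?thesis using part1[OF True assms(2) hc sz] .
  next
    case False
    obtain vs where vs: "2 \<le> length vs" "distinct vs" "set vs = V"
      using hc unfolding ham_cycle_def by blast
    have l01: "0 < length vs" "1 < length vs" using vs(1) by linarith+
    have "vs ! 0 \<in> set vs" "vs ! 1 \<in> set vs" using nth_mem[OF l01(1)] nth_mem[OF l01(2)] .
    then have "vs ! 0 \<in> V" "vs ! 1 \<in> V" using vs(3) by simp_all
    moreover have "vs ! 0 \<noteq> vs ! 1" using nth_eq_iff_index_eq[OF vs(2) l01] by simp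
    ultimately have False using no_pair_even[OF _ assms(2) sz] False by metis
    then show ?thesis ..
  qed
next
  assume HP: "\<forall>x\<in>V. \<forall>y\<in>V. x \<noteq> y \<longrightarrow> (\<exists>P. ham_path V E ends x y P \<and> SZ k V (E - P) ends)"
  show "WC k V E ends"
  proof (cases "odd k")
    case True
    show ?thesis
      unfolding WC_def Let_def
      apply (intro allI impI)
      apply (elim conjE)
      apply (rule part2_core[OF True assms(2) HP])
             apply assumption
            apply assumption
           apply assumption
          apply assumption
         apply assumption
        apply assumption
       apply assumption
      apply assumption
      done
  next
    case False
    have noPair: "\<not> (\<exists>x\<in>V. \<exists>y\<in>V. x \<noteq> y)"
    proof
      assume "\<exists>x\<in>V. \<exists>y\<in>V. x \<noteq> y"
      then obtain x y where xy: "x \<in> V" "y \<in> V" "x \<noteq> y" by blast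
      then obtain P where "SZ k V (E - P) ends" using HP by blast
      then show False using no_pair_even[OF _ assms(2) _ xy] False by metis
    qed
    have nn: "\<not> (\<exists>x\<in>V. \<exists>y\<in>V. x \<noteq> y \<and> Q x y)" for Q using noPair by blast
    show ?thesis
      unfolding WC_def Let_def
      apply (intro allI impI)
      apply (elim conjE)
      apply (rule FalseE)
      apply (erule notE[OF nn])
      done
  qed
qed

end
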